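(* Let $r\ge1$ and let $p_1,p_2,\ldots,p_r$ be primes, each $\ge5$ (not necessarily distinct). Then for every $n\ge0$, \[ b_2\!\left(\prod_{s=1}^{r-1}p_s^2\,p_{r}\, n+\frac{(24j+1)\prod_{s=1}^{r-1}p_s^2-1}{24}\right)\equiv 0 \pmod 2 \] for every integer $j$ with $0\le j\le p_r-1$ and $\left(\frac{24j+1}{p_r}\right)=-1$ (with the empty product equal to $1$).
   Context: For a positive integer $\ell$, $b_\ell(n)$ denotes the number of partitions of $n$ having no part divisible by $\ell$. $\left(\frac{a}{p}\right)$ is the Legendre symbol. *)

theory Defs
  imports "HOL-Number_Theory.Number_Theory" "HOL-Library.Multiset"
begin

definition b :: "nat \<Rightarrow> nat \<Rightarrow> nat" where
  "b l n = card {M :: nat multiset. (\<forall>x\<in>#M. 0 < x \<and> \<not> l dvd x) \<and> sum_mset M = n}"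

end

theory Submission imports Defs "HOL-Library.Nat_Bijection" begin


fun v2 :: "nat \<Rightarrow> nat" where
  "v2 x = (if x = 0 \<or> odd x then 0 else Suc (v2 (x div 2)))"

definition od :: "nat \<Rightarrow> nat" where "od x = x div 2 ^ v2 x"

declare v2.simps[simp del]

lemma v2_decomp: "x > 0 \<Longrightarrow> odd (od x) \<and> od x * 2 ^ v2 x = x"
proof (induction x rule: v2.induct)
  case (1 x)
  show ?case
  proof (cases "odd x")
    case True
    then show ?thesis using 1 by (simp add: od_def v2.simps[of x])
  next
    case False
    then have x2: "x div 2 > 0" "x = 2 * (x div 2)" using 1 by auto
    have IH: "odd (od (x div 2)) \<and> od (x div 2) * 2 ^ v2 (x div 2) = x div 2"
      using 1 False by auto
    have v: "v2 x = Suc (v2 (x div 2))" using False 1 by (simp add: v2.simps)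
    have "od x = od (x div 2)" unfolding od_def v
      by (simp add: div_mult2_eq)
    then show ?thesis using IH v x2 by (metis mult.assoc mult.commute power_Suc)
  qed
qed

lemma odd_pow2_unique:
  fixes k k' :: nat
  assumes "odd k" "odd k'" "k * 2 ^ i = k' * 2 ^ j"
  shows "k = k' \<and> i = j"
proof -
  have "i = j"
  proof (rule ccontr)
    assume "i \<noteq> j"
    then consider "i < j" | "j < i" by linarith
    then show False
    proof cases
      case 1
      then have "k * 2^i = (k' * 2^(j-i)) * 2^i" using assms(3)
        by (simp add: power_add[symmetric] mult.assoc)
      then have "k = k' * 2^(j-i)" by simp
      then show False using assms(1) 1 by simp
    next
      case 2
      then have "k' * 2^j = (k * 2^(i-j)) * 2^j" using assms(3)
        by (simp add: power_add[symmetric] mult.assoc)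
      then have "k' = k * 2^(i-j)" by simp
      then show False using assms(2) 2 by simp
    qed
  qed
  then show ?thesis using assms by simp
qed

lemma od_v2_mult: "odd k \<Longrightarrow> od (k * 2^i) = k \<and> v2 (k * 2^i) = i"
  using v2_decomp[of "k * 2^i"] odd_pow2_unique[of "od (k*2^i)" k "v2 (k*2^i)" i]
  by (metis gr0I mult_is_0 odd_pos power_not_zero zero_neq_numeral)

definition gl :: "nat set \<Rightarrow> nat multiset" where
  "gl S = (\<Sum>x\<in>S. replicate_mset (2 ^ v2 x) (od x))"

definition hl :: "nat multiset \<Rightarrow> nat set" where
  "hl M = (\<lambda>(k,i). k * 2^i) ` (SIGMA k:set_mset M. set_decode (count M k))"

definition DS :: "nat \<Rightarrow> nat set set" where
  "DS N = {S. finite S \<and> 0 \<notin> S \<and> \<Sum>S = N}"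

definition OM :: "nat \<Rightarrow> nat multiset set" where
  "OM N = {M. (\<forall>x\<in>#M. 0 < x \<and> \<not> 2 dvd x) \<and> sum_mset M = N}"

lemma count_gl:
  assumes "finite S" "0 \<notin> S" "odd k"
  shows "count (gl S) k = set_encode {i. k * 2^i \<in> S}"
proof -
  have "count (gl S) k = (\<Sum>x\<in>S. if od x = k then 2 ^ v2 x else 0)"
    unfolding gl_def count_sum by (intro sum.cong) auto
  also have "\<dots> = (\<Sum>x\<in>{x\<in>S. od x = k}. 2 ^ v2 x)"
    using assms(1) by (simp add: sum.inter_filter)
  also have "\<dots> = (\<Sum>i\<in>{i. k * 2^i \<in> S}. 2 ^ i)"
    apply (rule sum.reindex_bij_witness[of _ "\<lambda>i. k * 2^i" v2])
    using od_v2_mult[OF assms(3)] v2_decomp assms(2) by (auto, metis gr0I)+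
  finally show ?thesis by (simp add: set_encode_def)
qed

lemma count_gl_even:
  assumes "finite S" "0 \<notin> S" "even k"
  shows "count (gl S) k = 0"
proof -
  have "\<forall>x\<in>S. od x \<noteq> k" using assms v2_decomp by (metis gr0I)
  then show ?thesis unfolding gl_def count_sum by (intro sum.neutral) auto
qed

lemma finite_hl: "finite (hl M)"
  unfolding hl_def by auto

lemma mem_hl: "x \<in> hl M \<longleftrightarrow> (\<exists>k i. x = k * 2^i \<and> k \<in># M \<and> i \<in> set_decode (count M k))"
  unfolding hl_def by auto

lemma gl_sum: "finite S \<Longrightarrow> 0 \<notin> S \<Longrightarrow> sum_mset (gl S) = \<Sum>S"
  unfolding gl_def
proof (induction S rule: finite_induct)
  case (insert x F)
  then have "x > 0" by (auto intro: gr0I)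
  then show ?case using insert v2_decomp[of x] by (simp add: mult.commute)
qed simp

lemma gl_hl: assumes M: "M \<in> OM N" shows "gl (hl M) = M"
proof -
  have f: "finite (hl M)" "0 \<notin> hl M" using finite_hl M
    by (auto simp: mem_hl OM_def)
  show "gl (hl M) = M"
  proof (rule multiset_eqI)
    fix k
    show "count (gl (hl M)) k = count M k"
    proof (cases "odd k")
      case True
      have "{i. k * 2^i \<in> hl M} = set_decode (count M k)"
      proof (intro Set.set_eqI iffI)
        fix i assume "i \<in> {i. k * 2^i \<in> hl M}"
        then obtain k' i' where e: "k * 2^i = k' * 2^i'" "k' \<in># M" "i' \<in> set_decode (count M k')"
          unfolding mem_hl by blast
        have "odd k'" using e(2) M by (auto simp: OM_def)
        then show "i \<in> set_decode (count M k)" using odd_pow2_unique[OF True _ e(1)] e by auto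
      next
        fix i assume i: "i \<in> set_decode (count M k)"
        then have "k \<in># M" by (metis count_eq_zero_iff set_decode_zero empty_iff)
        then show "i \<in> {i. k * 2^i \<in> hl M}" using i unfolding mem_hl by blast
      qed
      then show ?thesis using count_gl[OF f True] by simp
    next
      case False
      then have "count M k = 0" using M by (auto simp: OM_def) (metis count_inI)
      then show ?thesis using count_gl_even[OF f] False by simp
    qed
  qed
qed

lemma glaisher: "b 2 N = card (DS N)"
proof -
  have "bij_betw gl (DS N) (OM N)"
  proof (rule bij_betw_byWitness[of _ hl])
    show "\<forall>S\<in>DS N. hl (gl S) = S"
    proof
      fix S assume S: "S \<in> DS N"
      then have fS: "finite S" "0 \<notin> S" by (auto simp: DS_def)
      have fin: "\<And>k. finite {i. k * 2^i \<in> S}"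
      proof -
        fix k :: nat
        show "finite {i. k * 2^i \<in> S}"
        proof (cases "k = 0")
          case True then show ?thesis using fS by simp
        next
          case False
          have "inj (\<lambda>i. k * 2^i)" using False by (auto intro: injI simp: power_inject_exp)
          then show ?thesis using finite_vimageI[OF fS(1)] by (simp add: vimage_def)
        qed
      qed
      show "hl (gl S) = S"
      proof (rule Set.set_eqI, rule iffI)
        fix x assume "x \<in> hl (gl S)"
        then obtain k i where x: "x = k * 2^i" "k \<in># gl S" "i \<in> set_decode (count (gl S) k)"
          unfolding mem_hl by blast
        have "odd k" using x(2) count_gl_even[OF fS, of k] by (metis count_eq_zero_iff)
        then show "x \<in> S" using x count_gl[OF fS \<open>odd k\<close>] fin by simp
      next
        fix x assume xS: "x \<in> S"
        then have "x > 0" using fS by (auto intro: gr0I)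
        define k where "k = od x"
        define i where "i = v2 x"
        have ki: "odd k" "x = k * 2^i" using v2_decomp[OF \<open>x>0\<close>] k_def i_def by auto
        have c: "count (gl S) k = set_encode {i. k * 2^i \<in> S}" using count_gl[OF fS ki(1)] .
        have "i \<in> set_decode (count (gl S) k)" using c fin xS ki by simp
        moreover then have "k \<in># gl S"
          by (metis count_eq_zero_iff set_decode_zero empty_iff)
        ultimately show "x \<in> hl (gl S)" unfolding mem_hl using ki by blast
      qed
    qed
  next
    show "\<forall>M\<in>OM N. gl (hl M) = M" using gl_hl by blast
  next
    show "gl ` DS N \<subseteq> OM N"
    proof
      fix M assume "M \<in> gl ` DS N"
      then obtain S where S: "S \<in> DS N" "M = gl S" by blast
      then have fS: "finite S" "0 \<notin> S" "\<Sum>S = N" by (auto simp: DS_def)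
      have "\<forall>x\<in>#M. 0 < x \<and> \<not> 2 dvd x"
      proof
        fix x assume "x \<in># M"
        then have "odd x" using count_gl_even[OF fS(1,2), of x] S(2) by (metis count_eq_zero_iff)
        then show "0 < x \<and> \<not> 2 dvd x" by (auto intro: odd_pos)
      qed
      then show "M \<in> OM N" using gl_sum[OF fS(1,2)] fS(3) S(2) by (simp add: OM_def)
    qed
  next
    show "hl ` OM N \<subseteq> DS N"
    proof
      fix S assume "S \<in> hl ` OM N"
      then obtain M where M: "M \<in> OM N" "S = hl M" by blast
      have f: "finite S" "0 \<notin> S" using finite_hl M by (auto simp: mem_hl OM_def)
      have "gl S = M" using gl_hl M by simp
      then have "\<Sum>S = N" using gl_sum[OF f] M by (simp add: OM_def)
      then show "S \<in> DS N" using f by (simp add: DS_def)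
    qed
  qed
  then have "card (DS N) = card (OM N)" by (rule bij_betw_same_card)
  then show ?thesis by (simp add: b_def OM_def)
qed



definition rl :: "nat set \<Rightarrow> nat" where
  "rl S = (LEAST k. Max S - k \<notin> S)"

definition valid :: "nat set \<Rightarrow> bool" where
  "valid S \<longleftrightarrow> finite S \<and> S \<noteq> {} \<and> 0 \<notin> S"

definition fr :: "nat set \<Rightarrow> nat set" where
  "fr S = (let m = Max S; s = Min S; r = rl S in
     if s \<le> r \<and> \<not> (s = r \<and> s = m - r + 1) then insert (m+1) (S - {s, m - s + 1})
     else if r < s \<and> \<not> (s = r + 1 \<and> s = m - r + 1) then insert (m - r) (insert r (S - {m}))
     else S)"

lemma rl_props:
  assumes "valid S"
  shows "Max S - rl S \<notin> S" "\<And>k. k < rl S \<Longrightarrow> Max S - k \<in> S" "1 \<le> rl S" "rl S \<le> Max S"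
proof -
  have ex: "Max S - Max S \<notin> S" using assms by (simp add: valid_def)
  show 1: "Max S - rl S \<notin> S" unfolding rl_def using ex by (rule LeastI)
  show "\<And>k. k < rl S \<Longrightarrow> Max S - k \<in> S" unfolding rl_def using not_less_Least by blast
  show "rl S \<le> Max S" unfolding rl_def using ex by (rule Least_le)
  have "Max S \<in> S" using assms by (simp add: valid_def)
  then show "1 \<le> rl S" using 1 by (cases "rl S") auto
qed

lemma min_le_run:
  assumes "valid S" shows "Min S \<le> Max S - rl S + 1" "1 \<le> Min S" "Min S \<le> Max S"
proof -
  have f: "finite S" "S \<noteq> {}" "0 \<notin> S" using assms by (auto simp: valid_def)
  have "Max S - (rl S - 1) \<in> S" using rl_props(2)[OF assms, of "rl S - 1"] rl_props(3)[OF assms] by simp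
  moreover have "Max S - (rl S - 1) = Max S - rl S + 1" using rl_props[OF assms] by simp
  ultimately show "Min S \<le> Max S - rl S + 1" using f by (metis Min_le)
  show "1 \<le> Min S" using f Min_in[OF f(1,2)] by (cases "Min S") auto
  show "Min S \<le> Max S" using f by simp
qed

lemma rl_eqI:
  assumes "valid S" "Max S - k \<notin> S" "\<And>j. j < k \<Longrightarrow> Max S - j \<in> S"
  shows "rl S = k"
  unfolding rl_def using assms by (intro Least_equality) (auto simp: not_less[symmetric])

lemma caseA:
  assumes v: "valid S" and c: "Min S \<le> rl S" "\<not> (Min S = rl S \<and> Min S = Max S - rl S + 1)"
  defines "S' \<equiv> insert (Max S + 1) (S - {Min S, Max S - Min S + 1})"
  shows "fr S = S'" "valid S'" "\<Sum>S' = \<Sum>S" "S' \<noteq> S" "fr S' = S"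
proof -
  define m where "m = Max S"
  define s where "s = Min S"
  define r where "r = rl S"
  have f: "finite S" "S \<noteq> {}" "0 \<notin> S" using v by (auto simp: valid_def)
  note rp = rl_props[OF v, folded m_def r_def]
  note ml = min_le_run[OF v, folded m_def r_def s_def]
  have sS: "s \<in> S" using f by (simp add: s_def)
  have tS: "m - s + 1 \<in> S" using rp(2)[of "s - 1"] c ml unfolding s_def r_def by (simp add: Suc_diff_le)
  have st: "s < m - s + 1"
  proof -
    have "m - r + 1 \<le> m - s + 1" using c(1) ml rp unfolding s_def r_def by linarith
    moreover have "s \<le> m - r + 1" using ml by simp
    ultimately have "s \<le> m - s + 1" by linarith
    moreover have "s \<noteq> m - s + 1" using c(2) ml c(1) rp unfolding s_def r_def m_def by linarith
    ultimately show ?thesis by linarith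
  qed
  have mS: "m + 1 \<notin> S" proof assume "m + 1 \<in> S" then have "m + 1 \<le> m" using f Max_ge[of S "m+1"] unfolding m_def by blast then show False by simp qed
  have allS: "\<And>x. x \<in> S \<Longrightarrow> s \<le> x \<and> x \<le> m" using f by (simp add: s_def m_def)
  have S'eq: "S' = insert (m + 1) (S - {s, m - s + 1})" by (simp add: S'_def m_def s_def)
  show fr: "fr S = S'" using c unfolding fr_def Let_def S'_def by simp
  show vS': "valid S'" using f unfolding S'eq valid_def by auto
  define R where "R = S - {s, m - s + 1}"
  have Seq: "S = insert s (insert (m - s + 1) R)" using sS tS unfolding R_def by auto
  have fR: "finite R" using f by (simp add: R_def)
  have "\<Sum>S = s + (m - s + 1) + \<Sum>R" unfolding Seq using fR st by (simp add: R_def)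
  moreover have "\<Sum>S' = (m + 1) + \<Sum>R" unfolding S'eq R_def[symmetric] using fR mS by (simp add: R_def)
  ultimately show "\<Sum>S' = \<Sum>S" using st by linarith
  show "S' \<noteq> S" using mS S'eq by auto
  have fS': "finite S'" "S' \<noteq> {}" using vS' by (auto simp: valid_def)
  have maxS': "Max S' = m + 1" using fS' allS unfolding S'eq by (intro Max_eqI) (auto, metis le_SucI)
  have minS': "s < Min S'" using fS' allS st unfolding S'eq
    by (subst Min_gr_iff) (auto, metis le_neq_implies_less)
  have rlS': "rl S' = s"
  proof (rule rl_eqI[OF vS'])
    have "Max S' - s = m - s + 1" using maxS' st by simp
    moreover have "m - s + 1 \<notin> S'" unfolding S'eq using st ml by auto
    ultimately show "Max S' - s \<notin> S'" by simp
    fix j assume j: "j < s"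
    show "Max S' - j \<in> S'"
    proof (cases j)
      case 0 then show ?thesis using maxS' Max_in[OF fS'] by simp
    next
      case (Suc i)
      have "m - i \<in> S" using rp(2)[of i] j Suc c(1) unfolding s_def r_def by simp
      moreover have "m - i \<noteq> s" "m - i \<noteq> m - s + 1" using j Suc st by auto
      ultimately have "m - i \<in> S'" unfolding S'eq by auto
      moreover have "Max S' - j = m - i" using maxS' Suc by simp
      ultimately show ?thesis by simp
    qed
  qed
  have notA: "\<not> Min S' \<le> rl S'" using minS' rlS' by simp
  have notbad: "\<not> (Min S' = rl S' + 1 \<and> Min S' = Max S' - rl S' + 1)"
    using rlS' maxS' st by auto
  have "fr S' = insert (Max S' - rl S') (insert (rl S') (S' - {Max S'}))"
    using notA notbad minS' rlS' unfolding fr_def Let_def by auto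
  also have "\<dots> = insert (m - s + 1) (insert s (S' - {m + 1}))" using maxS' rlS' st ml by (simp add: Suc_diff_le)
  also have "\<dots> = S" unfolding S'eq using sS tS mS st by auto
  finally show "fr S' = S" .
qed

lemma caseB:
  assumes v: "valid S" and c: "rl S < Min S" "\<not> (Min S = rl S + 1 \<and> Min S = Max S - rl S + 1)"
  defines "S' \<equiv> insert (Max S - rl S) (insert (rl S) (S - {Max S}))"
  shows "fr S = S'" "valid S'" "\<Sum>S' = \<Sum>S" "S' \<noteq> S" "fr S' = S"
proof -
  define m where "m = Max S"
  define s where "s = Min S"
  define r where "r = rl S"
  have f: "finite S" "S \<noteq> {}" "0 \<notin> S" using v by (auto simp: valid_def)
  note rp = rl_props[OF v, folded m_def r_def]
  note ml = min_le_run[OF v, folded m_def r_def s_def]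
  have rs: "r < s" using c(1) by (simp add: r_def s_def)
  have allS: "\<And>x. x \<in> S \<Longrightarrow> s \<le> x \<and> x \<le> m" using f by (simp add: s_def m_def)
  have mS: "m \<in> S" using f by (simp add: m_def)
  have rS: "r \<notin> S" using allS rs by force
  have mrS: "m - r \<notin> S" using rp by simp
  have rmr: "r < m - r"
  proof -
    have "r \<le> m - r" using ml rs rp by linarith
    moreover have "r \<noteq> m - r" using c(2) ml rs rp unfolding s_def r_def m_def by linarith
    ultimately show ?thesis by simp
  qed
  have S'eq: "S' = insert (m - r) (insert r (S - {m}))" by (simp add: S'_def m_def r_def)
  show "fr S = S'" using c unfolding fr_def Let_def S'_def by auto
  show vS': "valid S'" using f rp rmr unfolding S'eq valid_def by auto
  define R where "R = S - {m}"
  have fR: "finite R" using f by (simp add: R_def)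
  have Seq: "S = insert m R" using mS unfolding R_def by auto
  have "\<Sum>S = m + \<Sum>R" unfolding R_def using sum.remove[OF f(1) mS, of "\<lambda>x. x"] by simp
  moreover have "\<Sum>S' = (m - r) + r + \<Sum>R" unfolding S'eq R_def[symmetric]
    using fR rmr mrS rS by (simp add: R_def)
  ultimately show "\<Sum>S' = \<Sum>S" using rp by simp
  show "S' \<noteq> S" using rS S'eq by auto
  have fS': "finite S'" "S' \<noteq> {}" using vS' by (auto simp: valid_def)
  have m1: "m - 1 \<in> S'"
  proof (cases "r = 1")
    case True then show ?thesis unfolding S'eq by simp
  next
    case False
    then have "m - 1 \<in> S" using rp(2)[of 1] rp(3) by simp
    moreover have "m - 1 \<noteq> m" using rp rmr by simp
    ultimately show ?thesis unfolding S'eq by simp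
  qed
  have le: "\<forall>x\<in>S'. x \<le> m - 1"
  proof
    fix x assume "x \<in> S'"
    then consider "x = m - r" | "x = r" | "x \<in> S" "x \<noteq> m" unfolding S'eq by auto
    then show "x \<le> m - 1"
    proof cases
      case 1 then show ?thesis using rp(3) rmr by linarith
    next
      case 2 then show ?thesis using rmr by linarith
    next
      case 3 then show ?thesis using allS[of x] by linarith
    qed
  qed
  have maxS': "Max S' = m - 1" using fS' m1 le by (intro Max_eqI) auto
  have ge: "\<forall>x\<in>S'. r \<le> x"
  proof
    fix x assume "x \<in> S'"
    then consider "x = m - r" | "x = r" | "x \<in> S" unfolding S'eq by auto
    then show "r \<le> x"
    proof cases
      case 1 then show ?thesis using rmr by linarith
    next
      case 2 then show ?thesis by simp
    next
      case 3 then show ?thesis using allS[of x] rs by linarith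
    qed
  qed
  have rS': "r \<in> S'" unfolding S'eq by simp
  have minS': "Min S' = r" using fS' ge rS' by (intro Min_eqI) auto
  have rlS': "r \<le> rl S'"
  proof (rule ccontr)
    assume "\<not> r \<le> rl S'"
    then have q: "rl S' < r" by simp
    have n: "Max S' - rl S' \<notin> S'" using rl_props(1)[OF vS'] .
    show False
    proof (cases "rl S' + 1 < r")
      case True
      then have "m - (rl S' + 1) \<in> S" using rp(2) by blast
      moreover have "m - (rl S' + 1) \<noteq> m" using True rmr by simp
      ultimately have "m - (rl S' + 1) \<in> S'" unfolding S'eq by simp
      moreover have "Max S' - rl S' = m - (rl S' + 1)" using maxS' by simp
      ultimately show False using n by simp
    next
      case False
      then have "rl S' + 1 = r" using q by simp
      then have "Max S' - rl S' = m - r" using maxS' rmr by simp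
      moreover have "m - r \<in> S'" unfolding S'eq by simp
      ultimately show False using n by simp
    qed
  qed
  have notbad: "\<not> (Min S' = rl S' \<and> Min S' = Max S' - rl S' + 1)"
    using minS' maxS' rmr by auto
  have "fr S' = insert (Max S' + 1) (S' - {Min S', Max S' - Min S' + 1})"
    using rlS' minS' notbad unfolding fr_def Let_def by auto
  also have "\<dots> = insert m (S' - {r, m - r})"
  proof -
    have "Max S' - Min S' + 1 = m - r" using maxS' minS' rmr by linarith
    moreover have "Max S' + 1 = m" using maxS' rmr by linarith
    ultimately show ?thesis using minS' by simp
  qed
  also have "\<dots> = S" unfolding S'eq using mS rS mrS rmr rp by auto
  finally show "fr S' = S" .
qed

lemma gauss2: "(\<Sum>{a..<a+c}) * 2 + c = c * (2 * a + (c::nat))"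
  by (induction c) (auto simp: algebra_simps)

lemma fixed_square:
  assumes v: "valid S" and fx: "fr S = S"
  shows "\<exists>x. 24 * \<Sum>S + 1 = x^2"
proof -
  define m where "m = Max S"
  define s where "s = Min S"
  define r where "r = rl S"
  have f: "finite S" "S \<noteq> {}" "0 \<notin> S" using v by (auto simp: valid_def)
  note rp = rl_props[OF v, folded m_def r_def]
  note ml = min_le_run[OF v, folded m_def r_def s_def]
  have bad: "(s = r \<and> s = m - r + 1) \<or> (s = r + 1 \<and> s = m - r + 1)"
  proof (rule ccontr)
    assume nb: "\<not> ?thesis"
    show False
    proof (cases "s \<le> r")
      case True
      then show False using caseA(4,1)[OF v] nb fx unfolding s_def r_def m_def by metis
    next
      case False
      then show False using caseB(4,1)[OF v] nb fx unfolding s_def r_def m_def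
        by (metis not_le)
    qed
  qed
  then have sm: "s = m - r + 1" by blast
  have Seq: "S = {s..<s+r}"
  proof (intro Set.set_eqI iffI)
    fix x assume "x \<in> S"
    then have "s \<le> x" "x \<le> m" using f by (auto simp: s_def m_def)
    then show "x \<in> {s..<s+r}" using sm rp by auto
  next
    fix x assume x: "x \<in> {s..<s+r}"
    then have "m - (m - x) \<in> S" using rp(2)[of "m - x"] sm rp by auto
    then show "x \<in> S" using x sm rp by auto
  qed
  have g: "\<Sum>S * 2 + r = r * (2 * s + r)" unfolding Seq by (rule gauss2)
  obtain q where q: "r = Suc q" using rp(3) by (cases r) auto
  from bad show ?thesis
  proof
    assume "s = r \<and> s = m - r + 1"
    then have "\<Sum>S * 2 + Suc q = Suc q * (3 * Suc q)" using g q by (simp add: algebra_simps)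
    then have "\<Sum>S * 2 = 3*q*q + 5*q + 2" by (simp add: algebra_simps)
    moreover have "24 * \<Sum>S + 1 = 12 * (\<Sum>S * 2) + 1" by simp
    ultimately have "24 * \<Sum>S + 1 = 12 * (3*q*q + 5*q + 2) + 1" by simp
    then have "24 * \<Sum>S + 1 = (6 * q + 5)^2" by (simp add: algebra_simps power2_eq_square)
    then show ?thesis by blast
  next
    assume "s = r + 1 \<and> s = m - r + 1"
    then have "\<Sum>S * 2 + Suc q = Suc q * (3 * Suc q + 2)" using g q by (simp add: algebra_simps)
    then have "\<Sum>S * 2 = 3*q*q + 7*q + 4" by (simp add: algebra_simps)
    moreover have "24 * \<Sum>S + 1 = 12 * (\<Sum>S * 2) + 1" by simp
    ultimately have "24 * \<Sum>S + 1 = 12 * (3*q*q + 7*q + 4) + 1" by simp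
    then have "24 * \<Sum>S + 1 = (6 * q + 7)^2" by (simp add: algebra_simps power2_eq_square)
    then show ?thesis by blast
  qed
qed

lemma involution_even:
  assumes "finite X" "\<And>x. x \<in> X \<Longrightarrow> f x \<in> X \<and> f (f x) = x \<and> f x \<noteq> x"
  shows "even (card X)"
  using assms
proof (induction X rule: finite_psubset_induct)
  case (psubset X)
  show ?case
  proof (cases "X = {}")
    case True then show ?thesis by simp
  next
    case False
    then obtain x where x: "x \<in> X" by blast
    define Y where "Y = X - {x, f x}"
    have fx: "f x \<in> X" "f x \<noteq> x" using psubset.prems x by auto
    have "Y \<subset> X" using x unfolding Y_def by auto
    moreover have "\<And>y. y \<in> Y \<Longrightarrow> f y \<in> Y \<and> f (f y) = y \<and> f y \<noteq> y"
    proof -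
      fix y assume "y \<in> Y"
      then have y: "y \<in> X" "y \<noteq> x" "y \<noteq> f x" unfolding Y_def by auto
      have p: "f y \<in> X" "f (f y) = y" "f y \<noteq> y" using psubset.prems[OF y(1)] by auto
      have "f y \<noteq> x" using p(2) y(3) by auto
      moreover have "f y \<noteq> f x"
      proof
        assume "f y = f x"
        then have "f (f y) = f (f x)" by simp
        then show False using p(2) psubset.prems[OF x] y(2) by simp
      qed
      ultimately show "f y \<in> Y \<and> f (f y) = y \<and> f y \<noteq> y" using p unfolding Y_def by auto
    qed
    ultimately have "even (card Y)" using psubset.IH by blast
    moreover have "card X = card Y + 2"
    proof -
      have e: "X = insert x (insert (f x) Y)" using x fx unfolding Y_def by auto
      have fY: "finite Y" using psubset.hyps by (simp add: Y_def)
      have n: "x \<notin> insert (f x) Y" "f x \<notin> Y" using fx by (auto simp: Y_def)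
      have "card (insert x (insert (f x) Y)) = card Y + 2" using fY n by simp
      then show ?thesis using e by simp
    qed
    ultimately show ?thesis by simp
  qed
qed

lemma distinct_even:
  fixes N :: nat
  assumes ns: "\<not> (\<exists>x. 24 * N + 1 = x^2)"
  shows "even (card {S. finite S \<and> 0 \<notin> S \<and> \<Sum>S = N})"
proof -
  let ?X = "{S. finite S \<and> 0 \<notin> S \<and> \<Sum>S = N}"
  have N0: "N \<noteq> 0"
  proof
    assume "N = 0"
    then have "24 * N + 1 = 1^2" by simp
    then show False using ns by blast
  qed
  have sub: "?X \<subseteq> Pow {1..N}"
  proof
    fix S assume S: "S \<in> ?X"
    have "\<forall>x\<in>S. 1 \<le> x \<and> x \<le> N" using S member_le_sum[of _ S "\<lambda>x. x"]
      by (auto simp: Suc_le_eq intro: gr0I)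
    then show "S \<in> Pow {1..N}" by auto
  qed
  have fin: "finite ?X" using finite_subset[OF sub] by simp
  have val: "\<And>S. S \<in> ?X \<Longrightarrow> valid S" using N0 unfolding valid_def by auto
  show ?thesis
  proof (rule involution_even[OF fin, of fr])
    fix S assume S: "S \<in> ?X"
    have v: "valid S" using val S .
    have nfx: "fr S \<noteq> S"
    proof
      assume "fr S = S"
      then show False using fixed_square[OF v] S ns by auto
    qed
    have "valid (fr S) \<and> \<Sum>(fr S) = \<Sum>S \<and> fr (fr S) = fr S \<longrightarrow> False \<or> True" by simp
    have main: "valid (fr S) \<and> \<Sum>(fr S) = \<Sum>S \<and> fr (fr S) = S"
    proof (cases "Min S \<le> rl S \<and> \<not> (Min S = rl S \<and> Min S = Max S - rl S + 1)")
      case True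
      then show ?thesis using caseA[OF v] by auto
    next
      case F1: False
      show ?thesis
      proof (cases "rl S < Min S \<and> \<not> (Min S = rl S + 1 \<and> Min S = Max S - rl S + 1)")
        case True
        then show ?thesis using caseB[OF v] by auto
      next
        case False
        have "fr S = S" unfolding fr_def Let_def by (simp only: if_not_P[OF F1] if_not_P[OF False])
        then show ?thesis using nfx by simp
      qed
    qed
    then show "fr S \<in> ?X \<and> fr (fr S) = S \<and> fr S \<noteq> S" using S nfx by (auto simp: valid_def)
  qed
qed



lemma sq24_aux: "t < 24 \<Longrightarrow> odd t \<Longrightarrow> \<not> 3 dvd t \<Longrightarrow> t^2 mod 24 = (1::nat)"
proof -
  assume a: "t < 24" "odd t" "\<not> 3 dvd t"
  have "t \<in> {..<24}" using a by simp
  then show ?thesis using a by (auto simp: lessThan_nat_numeral power2_eq_square)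
qed

lemma prime_sq_24: assumes "prime (q::nat)" "q \<ge> 5" shows "q^2 mod 24 = 1"
proof -
  have o: "odd q" using assms prime_odd_nat by simp
  have t: "\<not> 3 dvd q" using assms unfolding prime_nat_iff by auto
  have "odd (q mod 24)" using o by (simp add: odd_iff_mod_2_eq_one mod_mod_cancel)
  moreover have "\<not> 3 dvd (q mod 24)" using t by (simp add: dvd_mod_iff)
  ultimately have "(q mod 24)^2 mod 24 = 1" by (intro sq24_aux) auto
  then show ?thesis by (simp add: power_mod)
qed

theorem theorem3p7:
  fixes r :: nat and p :: "nat \<Rightarrow> nat" and n j :: nat
  assumes "r \<ge> 1"
    and "\<And>s. 1 \<le> s \<Longrightarrow> s \<le> r \<Longrightarrow> prime (p s) \<and> p s \<ge> 5"
    and "j \<le> p r - 1"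
    and "Legendre (int (24 * j + 1)) (int (p r)) = -1"
  shows "even (b 2 ((\<Prod>s=1..r-1. p s ^ 2) * p r * n
                 + ((24 * j + 1) * (\<Prod>s=1..r-1. p s ^ 2) - 1) div 24))"
proof -
  define R where "R = (\<Prod>s=1..r-1. p s)"
  define Q where "Q = (\<Prod>s=1..r-1. p s ^ 2)"
  have QR: "Q = R^2" unfolding Q_def R_def by (simp add: prod_power_distrib)
  have Rpos: "R > 0" unfolding R_def using assms(1,2)
    by (intro prod_pos) (metis atLeastAtMost_iff diff_le_self le_trans prime_gt_0_nat)
  have "[Q = (\<Prod>s=1..r-1. 1)] (mod 24)" unfolding Q_def
  proof (rule cong_prod)
    fix s assume "s \<in> {1..r-1}"
    then have "prime (p s) \<and> p s \<ge> 5" using assms(2) by auto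
    then show "[p s ^ 2 = 1] (mod 24)" using prime_sq_24 by (simp add: cong_def)
  qed
  then have Q1: "Q mod 24 = 1" by (simp add: cong_def)
  define N where "N = Q * p r * n + ((24 * j + 1) * Q - 1) div 24"
  have "((24 * j + 1) * Q) mod 24 = (((24 * j + 1) mod 24) * (Q mod 24)) mod 24"
    by (simp only: mod_mult_eq)
  then have "((24 * j + 1) * Q) mod 24 = 1" using Q1 by simp
  then have X: "(24 * j + 1) * Q = 24 * (((24 * j + 1) * Q) div 24) + 1"
    using div_mult_mod_eq[of "(24 * j + 1) * Q" 24] by linarith
  then have "(24 * j + 1) * Q - 1 = 24 * (((24 * j + 1) * Q) div 24)" by linarith
  then have d: "24 * (((24 * j + 1) * Q - 1) div 24) = (24 * j + 1) * Q - 1" by simp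
  have Qpos: "Q > 0" using QR Rpos by simp
  have eN: "24 * N + 1 = Q * (24 * p r * n + 24 * j + 1)"
    unfolding N_def using d Qpos by (simp add: algebra_simps)
  have ns: "\<not> (\<exists>x. 24 * N + 1 = x^2)"
  proof
    assume "\<exists>x. 24 * N + 1 = x^2"
    then obtain x where x: "x^2 = R^2 * (24 * p r * n + 24 * j + 1)" using eN QR by metis
    then have "R^2 dvd x^2" by simp
    then have "R dvd x" by simp
    then obtain y where y: "x = R * y" by blast
    have "R^2 * y^2 = R^2 * (24 * p r * n + 24 * j + 1)" using x y by (simp add: power_mult_distrib)
    moreover have R2: "R^2 \<noteq> 0" using Rpos by simp
    ultimately have yy: "y^2 = 24 * p r * n + 24 * j + 1" using mult_left_cancel[OF R2] by blast
    have "[int y ^ 2 = int (24 * j + 1)] (mod int (p r))"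
    proof -
      have "int (y^2) = int (24 * j + 1) + int (p r) * int (24 * n)" using yy by simp
      then show ?thesis unfolding cong_iff_dvd_diff by (simp add: of_nat_power)
    qed
    then have "QuadRes (int (p r)) (int (24 * j + 1))" unfolding QuadRes_def by blast
    then have "Legendre (int (24 * j + 1)) (int (p r)) \<noteq> -1" unfolding Legendre_def by auto
    then show False using assms(4) by simp
  qed
  have "even (card (DS N))" unfolding DS_def using distinct_even[OF ns] .
  then show ?thesis using glaisher[of N] by (simp add: N_def Q_def)
qed

end
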